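(* Let $K\subseteq\mathbb{R}^n$ be a convex polytope. (a) If $K$ has $m$ vertices with $m\geq n+1$, and $t=2^{n/(m-1)}$, then $$\Gamma_{2^n}(K)\leq\frac{m-1}{m-1+k(m-1,t)}\leq\frac{m-1}{m-1+\lfloor a(t)(m-1)\rfloor}.$$ (b) If $K$ is centrally symmetric and has $2m$ vertices with $m\geq n$, and $t=2^{n/m}$, then $$\Gamma_{2^n}(K)\leq\frac{m}{m+l(m,t)}\leq\frac{m}{m+\lfloor b(t)m\rfloor}.$$
   Context: For a compact convex set $K\subseteq\mathbb{R}^n$ and $N\in\mathbb{Z}^+$, the covering functional is $\Gamma_N(K)=\inf\{\gamma>0:\exists C\subseteq\mathbb{R}^n,\ |C|=N,\ K\subseteq C+\gamma K\}$. Let $f(x)=\frac{(1+x)^{1+x}}{x^x}$ and $g(x)=\frac{2^x(1+x)^{1+x}}{x^x}$ on $(0,\infty)$ (strictly increasing, tending to $1$ as $x\to0^+$); for $t>1$, $a(t)$ and $b(t)$ are the unique solutions of $f(x)=t$ and $g(x)=t$. For $t\in(1,2]$ and $d\in\mathbb{Z}^+$, $k(d,t)$ is the nonnegative integer with $\binom{d+k(d,t)}{d}\leq t^d<\binom{d+k(d,t)+1}{d}$, and $l(d,t)$ is the nonnegative integer with $2^{l(d,t)}\binom{d+l(d,t)}{d}\leq t^d<2^{l(d,t)+1}\binom{d+l(d,t)+1}{d}$. *)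

theory Defs
  imports "HOL-Analysis.Analysis"
begin

definition covering_functional :: "nat \<Rightarrow> 'a::euclidean_space set \<Rightarrow> real" where
  "covering_functional N K = Inf {\<gamma>. \<gamma> > 0 \<and>
     (\<exists>C. finite C \<and> card C = N \<and> K \<subseteq> (\<Union>c\<in>C. (\<lambda>x. c + \<gamma> *\<^sub>R x) ` K))}"

definition ffun :: "real \<Rightarrow> real" where
  "ffun x = (1 + x) powr (1 + x) / x powr x"

definition gfun :: "real \<Rightarrow> real" where
  "gfun x = 2 powr x * (1 + x) powr (1 + x) / x powr x"

definition afun :: "real \<Rightarrow> real" where
  "afun t = (THE x. x > 0 \<and> ffun x = t)"

definition bfun :: "real \<Rightarrow> real" where
  "bfun t = (THE x. x > 0 \<and> gfun x = t)"

definition kfun :: "nat \<Rightarrow> real \<Rightarrow> nat" where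
  "kfun d t = (THE k. real ((d + k) choose d) \<le> t ^ d \<and> t ^ d < real ((d + k + 1) choose d))"

definition lfun :: "nat \<Rightarrow> real \<Rightarrow> nat" where
  "lfun d t = (THE l. 2 ^ l * real ((d + l) choose d) \<le> t ^ d \<and>
                      t ^ d < 2 ^ (l + 1) * real ((d + l + 1) choose d))"

definition vertices :: "'a::euclidean_space set \<Rightarrow> 'a set" where
  "vertices K = {v. v extreme_point_of K}"

definition centrally_symmetric :: "'a::euclidean_space set \<Rightarrow> bool" where
  "centrally_symmetric K \<longleftrightarrow> (\<exists>c. \<forall>x\<in>K. (2::real) *\<^sub>R c - x \<in> K)"

end

theory Submission
  imports Defs "HOL-Real_Asymp.Real_Asymp"
begin

lemma the_step:
  fixes h :: "nat \<Rightarrow> real"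
  assumes inc: "\<And>k. h k + 1 \<le> h (Suc k)" and h0: "h 0 \<le> T"
  shows "\<exists>!k. h k \<le> T \<and> T < h (k + 1)"
proof -
  have mono: "h i \<le> h j" if "i \<le> j" for i j
    using that proof (induction j)
    case 0 then show ?case by simp
  next
    case (Suc j) then show ?case using inc[of j] by (cases "i = Suc j") (auto simp: le_Suc_eq)
  qed
  have lin: "h 0 + real k \<le> h k" for k
  proof (induction k)
    case (Suc k) then show ?case using inc[of k] by simp
  qed simp
  obtain K :: nat where "T - h 0 < real K" using reals_Archimedean2 by blast
  then have ex: "\<exists>k. T < h (k+1)" using lin[of "K+1"] by (intro exI[of _ K]) simp
  define k0 where "k0 = (LEAST k. T < h (k+1))"
  have k0: "T < h (k0+1)" unfolding k0_def by (rule LeastI_ex[OF ex])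
  have k0': "h k0 \<le> T"
  proof (cases k0)
    case 0 then show ?thesis using h0 by simp
  next
    case (Suc k')
    then have "\<not> T < h (k'+1)" using not_less_Least[of k' "\<lambda>k. T < h (k+1)"] k0_def by simp
    then show ?thesis using Suc by simp
  qed
  show ?thesis
  proof (rule ex1I[of _ k0])
    show "h k0 \<le> T \<and> T < h (k0 + 1)" using k0 k0' by simp
  next
    fix k assume k: "h k \<le> T \<and> T < h (k + 1)"
    show "k = k0"
    proof (rule ccontr)
      assume "k \<noteq> k0"
      then consider "k + 1 \<le> k0" | "k0 + 1 \<le> k" by linarith
      then show False
      proof cases
        case 1 then show False using mono[OF 1] k k0' by simp
      next
        case 2 then show False using mono[OF 2] k k0 by simp
      qed
    qed
  qed
qed

lemma the_step_le:
  fixes h :: "nat \<Rightarrow> real"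
  assumes inc: "\<And>k. h k + 1 \<le> h (Suc k)" and h0: "h 0 \<le> T" and hj: "h j \<le> T"
  shows "j \<le> (THE k. h k \<le> T \<and> T < h (k + 1))"
    "h (THE k. h k \<le> T \<and> T < h (k + 1)) \<le> T"
proof -
  have mono: "h i \<le> h j" if "i \<le> j" for i j
    using that proof (induction j)
    case 0 then show ?case by simp
  next
    case (Suc j) then show ?case using inc[of j] by (cases "i = Suc j") (auto simp: le_Suc_eq)
  qed
  define k where "k = (THE k. h k \<le> T \<and> T < h (k + 1))"
  have k: "h k \<le> T \<and> T < h (k + 1)" unfolding k_def by (rule theI'[OF the_step[OF inc h0]])
  show "h (THE k. h k \<le> T \<and> T < h (k + 1)) \<le> T" using k k_def by simp
  show "j \<le> (THE k. h k \<le> T \<and> T < h (k + 1))" unfolding k_def[symmetric]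
  proof (rule ccontr)
    assume "\<not> j \<le> k" then have "k + 1 \<le> j" by simp
    then show False using mono[of "k+1" j] k hj by simp
  qed
qed

lemma binom_inc: "real ((d + k) choose d) + 1 \<le> real ((d + Suc k) choose d)" if d1: "d \<ge> 1" for d k :: nat
proof -
  obtain d' where d: "d = Suc d'" using d1 by (cases d) auto
  have "(d + Suc k) choose d = ((d + k) choose d) + ((d + k) choose d')"
    using d by simp
  moreover have "(d + k) choose d' \<ge> 1" proof - have "0 < (d + k) choose d'" by (simp add: d) then show ?thesis by linarith qed
  ultimately show ?thesis by simp
qed

lemma kfun_props:
  assumes "d \<ge> 1" "(1::real) \<le> T" "T = t ^ d" "real ((d + j) choose d) \<le> T"
  shows "j \<le> kfun d t" "real ((d + kfun d t) choose d) \<le> T"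
proof -
  let ?h = "\<lambda>k. real ((d + k) choose d)"
  have inc: "\<And>k. ?h k + 1 \<le> ?h (Suc k)" using binom_inc[OF assms(1)] by simp
  have h0: "?h 0 \<le> T" using assms by simp
  have eq: "kfun d t = (THE k. ?h k \<le> T \<and> T < ?h (k + 1))"
    unfolding kfun_def assms(3) by (simp add: add.assoc)
  show "j \<le> kfun d t" "real ((d + kfun d t) choose d) \<le> T"
    using the_step_le[of ?h T j, OF inc h0 assms(4)] unfolding eq by auto
qed

lemma lfun_props:
  assumes "d \<ge> 1" "(1::real) \<le> T" "T = t ^ d" "2 ^ j * real ((d + j) choose d) \<le> T"
  shows "j \<le> lfun d t" "2 ^ lfun d t * real ((d + lfun d t) choose d) \<le> T"
proof -
  let ?h = "\<lambda>k. 2 ^ k * real ((d + k) choose d)"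
  have inc: "\<And>k. ?h k + 1 \<le> ?h (Suc k)"
  proof -
    fix k
    have a: "real ((d + k) choose d) + 1 \<le> real ((d + Suc k) choose d)" using binom_inc[OF assms(1)] .
    have "(2::real) ^ k \<ge> 1" by simp
    have "?h k + 1 \<le> 2 ^ k * real ((d + k) choose d) + 2 ^ k" using \<open>(2::real) ^ k \<ge> 1\<close> by simp
    also have "\<dots> = 2 ^ k * (real ((d + k) choose d) + 1)" by (simp add: algebra_simps)
    also have "\<dots> \<le> 2 ^ k * real ((d + Suc k) choose d)" using a by (intro mult_left_mono) auto
    also have "\<dots> \<le> 2 ^ Suc k * real ((d + Suc k) choose d)" by simp
    finally show "?h k + 1 \<le> ?h (Suc k)" .
  qed
  have h0: "?h 0 \<le> T" using assms by simp
  have eq: "lfun d t = (THE k. ?h k \<le> T \<and> T < ?h (k + 1))"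
    unfolding lfun_def assms(3) by (simp add: add.assoc)
  show "j \<le> lfun d t" "2 ^ lfun d t * real ((d + lfun d t) choose d) \<le> T"
    using the_step_le[of ?h T j, OF inc h0 assms(4)] unfolding eq by auto
qed

definition Ffun :: "real \<Rightarrow> real" where "Ffun x = (1 + x) * ln (1 + x) - x * ln x"

lemma ffun_exp: "x > 0 \<Longrightarrow> ffun x = exp (Ffun x)"
  unfolding ffun_def Ffun_def by (simp add: powr_def exp_diff)

lemma Ffun_strict: assumes "0 < x" "x < y" shows "Ffun x < Ffun y"
proof (rule DERIV_pos_imp_increasing[OF assms(2)])
  fix z assume z: "x \<le> z" "z \<le> y"
  then have zp: "z > 0" using assms by simp
  have "DERIV Ffun z :> (1 * ln (1 + z) + (1 + z) * (1 / (1 + z)) - (1 * ln z + z * (1 / z)))"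
    unfolding Ffun_def using zp
    by (auto intro!: derivative_eq_intros)
  moreover have "(1 * ln (1 + z) + (1 + z) * (1 / (1 + z)) - (1 * ln z + z * (1 / z))) = ln (1 + z) - ln z"
    using zp by (simp add: field_simps)
  moreover have "ln (1 + z) - ln z > 0" using zp by simp
  ultimately show "\<exists>d. DERIV Ffun z :> d \<and> d > 0" by auto
qed

lemma ffun_strict: "0 < x \<Longrightarrow> x < y \<Longrightarrow> ffun x < ffun y"
  using Ffun_strict[of x y] by (simp add: ffun_exp)

lemma ffun_pos: "0 < x \<Longrightarrow> ffun x > 0" by (simp add: ffun_exp)

lemma gfun_eq: "gfun x = 2 powr x * ffun x"
  unfolding gfun_def ffun_def by simp

lemma gfun_strict: "0 < x \<Longrightarrow> x < y \<Longrightarrow> gfun x < gfun y"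
  unfolding gfun_eq using ffun_strict[of x y] ffun_pos[of x]
  by (intro mult_strict_mono) auto

lemma ffun_lim: "(ffun \<longlongrightarrow> 1) (at_right 0)"
  unfolding ffun_def by real_asymp

lemma gfun_lim: "(gfun \<longlongrightarrow> 1) (at_right 0)"
  unfolding gfun_def by real_asymp

lemma cont_f: "0 < e \<Longrightarrow> continuous_on {e..1} ffun"
  unfolding ffun_def by (intro continuous_intros) auto

lemma cont_g: "0 < e \<Longrightarrow> continuous_on {e..1} gfun"
  unfolding gfun_def by (intro continuous_intros) auto

lemma ffun_1: "ffun 1 = 4" unfolding ffun_def by simp
lemma gfun_1: "gfun 1 = 8" unfolding gfun_def by simp

lemma exists_val:
  fixes h :: "real \<Rightarrow> real"
  assumes lim: "(h \<longlongrightarrow> 1) (at_right 0)" and cont: "\<And>e. 0 < e \<Longrightarrow> continuous_on {e..1} h"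
    and t: "1 < t" "t \<le> h 1"
  shows "\<exists>x>0. h x = t"
proof -
  have "eventually (\<lambda>x. h x < t) (at_right 0)"
    using order_tendstoD(2)[OF lim t(1)] .
  then obtain b where b: "b > 0" "\<And>y. y > 0 \<Longrightarrow> y < b \<Longrightarrow> h y < t"
    unfolding eventually_at_right_field by auto
  define e where "e = min (b/2) (1/2)"
  have e: "0 < e" "e < b" "e \<le> 1" using b by (auto simp: e_def)
  have "h e \<le> t" using b(2)[of e] e by simp
  from IVT'[of h e t 1, OF this t(2) e(3) cont[OF e(1)]]
  obtain x where "e \<le> x" "h x = t" by auto
  then show ?thesis using e by (intro exI[of _ x]) auto
qed

lemma afun_props: assumes "1 < t" "t \<le> 2" shows "afun t > 0" "ffun (afun t) = t"
proof -
  have ex: "\<exists>x>0. ffun x = t"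
    by (rule exists_val[OF ffun_lim cont_f]) (use assms ffun_1 in auto)
  have "\<exists>!x. x > 0 \<and> ffun x = t"
  proof -
    from ex obtain x where x: "x > 0" "ffun x = t" by auto
    show ?thesis
    proof (rule ex1I[of _ x])
      fix y assume y: "y > 0 \<and> ffun y = t"
      show "y = x"
      proof (rule ccontr)
        assume "y \<noteq> x"
        then consider "y < x" | "x < y" by linarith
        then show False using ffun_strict x y by cases force+
      qed
    qed (use x in auto)
  qed
  from theI'[OF this] show "afun t > 0" "ffun (afun t) = t" unfolding afun_def by auto
qed

lemma bfun_props: assumes "1 < t" "t \<le> 2" shows "bfun t > 0" "gfun (bfun t) = t"
proof -
  have ex: "\<exists>x>0. gfun x = t"
    by (rule exists_val[OF gfun_lim cont_g]) (use assms gfun_1 in auto)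
  have "\<exists>!x. x > 0 \<and> gfun x = t"
  proof -
    from ex obtain x where x: "x > 0" "gfun x = t" by auto
    show ?thesis
    proof (rule ex1I[of _ x])
      fix y assume y: "y > 0 \<and> gfun y = t"
      show "y = x"
      proof (rule ccontr)
        assume "y \<noteq> x"
        then consider "y < x" | "x < y" by linarith
        then show False using gfun_strict x y by cases force+
      qed
    qed (use x in auto)
  qed
  from theI'[OF this] show "bfun t > 0" "gfun (bfun t) = t" unfolding bfun_def by auto
qed

lemma binom_term:
  fixes p q :: real
  assumes "p \<ge> 0" "q \<ge> 0"
  shows "real ((d + j) choose j) * p ^ j * q ^ d \<le> (p + q) ^ (d + j)"
proof -
  have "(p + q) ^ (d + j) = (\<Sum>k\<le>d+j. real ((d+j) choose k) * p ^ k * q ^ (d + j - k))"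
    by (rule binomial_ring)
  moreover have "real ((d + j) choose j) * p ^ j * q ^ (d + j - j) \<le> (\<Sum>k\<le>d+j. real ((d+j) choose k) * p ^ k * q ^ (d + j - k))"
    by (rule member_le_sum[of j "{..d+j}" "\<lambda>k. real ((d+j) choose k) * p ^ k * q ^ (d + j - k)"])
       (use assms in auto)
  ultimately show ?thesis by simp
qed

lemma binom_bound:
  fixes a :: real and c :: real
  assumes a: "a > 0" and c: "c \<ge> 1"
  shows "c ^ j * real ((d + j) choose d) \<le> (1 + a) ^ d * (c * (1 + a) / a) ^ j"
proof -
  let ?p = "a / (1 + a)" and ?q = "1 / (1 + a)"
  have "real ((d + j) choose j) * ?p ^ j * ?q ^ d \<le> (?p + ?q) ^ (d + j)"
    by (rule binom_term) (use a in auto)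
  also have "?p + ?q = 1" using a by (simp add: field_simps)
  finally have "real ((d + j) choose j) * ?p ^ j * ?q ^ d \<le> 1" by simp
  then have "real ((d + j) choose j) * (a ^ j / (1 + a) ^ (d + j)) \<le> 1"
    by (simp add: power_divide power_add field_simps)
  then have 1: "real ((d + j) choose j) \<le> (1 + a) ^ (d + j) / a ^ j"
    using a by (simp add: field_simps)
  have "(d + j) choose d = (d + j) choose j"
    using binomial_symmetric[of d "d+j"] by simp
  then have "c ^ j * real ((d + j) choose d) \<le> c ^ j * ((1 + a) ^ (d + j) / a ^ j)"
    using 1 c by (intro mult_left_mono) auto
  also have "\<dots> = (1 + a) ^ d * (c ^ j * (1 + a) ^ j / a ^ j)"
    by (simp add: power_add)
  also have "c ^ j * (1 + a) ^ j / a ^ j = (c * (1 + a) / a) ^ j"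
    by (simp only: power_divide power_mult_distrib)
  finally show ?thesis .
qed

lemma ffun_pow: assumes "a > 0" shows "ffun a ^ d = (1 + a) ^ d * ((1 + a) / a) powr (a * d)"
proof -
  have "ffun a = (1 + a) * ((1 + a) / a) powr a"
    unfolding ffun_def using assms by (simp add: powr_add powr_divide)
  then have "ffun a ^ d = (1 + a) ^ d * (((1 + a) / a) powr a) ^ d" by (simp add: power_mult_distrib)
  also have "(((1 + a) / a) powr a) ^ d = ((1 + a) / a) powr (a * d)"
    using assms by (simp add: powr_power mult.commute)
  finally show ?thesis .
qed

lemma gfun_pow: assumes "a > 0" shows "gfun a ^ d = (1 + a) ^ d * (2 * (1 + a) / a) powr (a * d)"
proof -
  have f: "ffun a = (1 + a) * ((1 + a) / a) powr a"
    unfolding ffun_def using assms by (simp add: powr_add powr_divide)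
  have "2 powr a * ((1 + a) / a) powr a = (2 * ((1 + a) / a)) powr a"
    by (rule powr_mult[symmetric])
  then have "gfun a = (1 + a) * (2 * (1 + a) / a) powr a"
    unfolding gfun_eq f by (simp add: algebra_simps)
  then have "gfun a ^ d = (1 + a) ^ d * ((2 * (1 + a) / a) powr a) ^ d" by (simp add: power_mult_distrib)
  also have "((2 * (1 + a) / a) powr a) ^ d = (2 * (1 + a) / a) powr (a * d)"
    using assms by (simp add: powr_power mult.commute)
  finally show ?thesis .
qed

lemma binom_f:
  assumes a: "a > 0" and j: "real j \<le> a * real d"
  shows "real ((d + j) choose d) \<le> ffun a ^ d"
proof -
  have "1 ^ j * real ((d + j) choose d) \<le> (1 + a) ^ d * (1 * (1 + a) / a) ^ j"
    by (rule binom_bound) (use a in auto)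
  then have 1: "real ((d + j) choose d) \<le> (1 + a) ^ d * ((1 + a) / a) ^ j" by simp
  have "((1 + a) / a) ^ j = ((1 + a) / a) powr (real j)"
    using a by (simp add: powr_realpow)
  also have "\<dots> \<le> ((1 + a) / a) powr (a * d)"
    using a j by (intro powr_mono) (auto simp: field_simps)
  finally have 2: "((1 + a) / a) ^ j \<le> ((1 + a) / a) powr (a * d)" .
  have "(1 + a) ^ d * ((1 + a) / a) ^ j \<le> (1 + a) ^ d * ((1 + a) / a) powr (a * d)"
    by (rule mult_left_mono[OF 2]) (use a in simp)
  with 1 show ?thesis using ffun_pow[OF a, of d] by linarith
qed

lemma binom_g:
  assumes a: "a > 0" and j: "real j \<le> a * real d"
  shows "2 ^ j * real ((d + j) choose d) \<le> gfun a ^ d"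
proof -
  have 1: "2 ^ j * real ((d + j) choose d) \<le> (1 + a) ^ d * (2 * (1 + a) / a) ^ j"
    by (rule binom_bound) (use a in auto)
  have "(2 * (1 + a) / a) ^ j = (2 * (1 + a) / a) powr (real j)"
    using a by (simp add: powr_realpow)
  also have "\<dots> \<le> (2 * (1 + a) / a) powr (a * d)"
    using a j by (intro powr_mono) (auto simp: field_simps)
  finally have 2: "(2 * (1 + a) / a) ^ j \<le> (2 * (1 + a) / a) powr (a * d)" .
  have "(1 + a) ^ d * (2 * (1 + a) / a) ^ j \<le> (1 + a) ^ d * (2 * (1 + a) / a) powr (a * d)"
    by (rule mult_left_mono[OF 2]) (use a in simp)
  with 1 show ?thesis using gfun_pow[OF a, of d] by linarith
qed

lemma size_as_sum:
  assumes "finite V" "set_mset M \<subseteq> V"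
  shows "size M = (\<Sum>v\<in>V. count M v)"
proof -
  have "size M = (\<Sum>v\<in>set_mset M. count M v)" by (simp add: size_multiset_overloaded_eq)
  also have "\<dots> = (\<Sum>v\<in>V. count M v)"
    by (rule sum.mono_neutral_left) (use assms in \<open>auto simp: not_in_iff\<close>)
  finally show ?thesis .
qed

lemma sub_mset_size:
  assumes "k \<le> size N" shows "\<exists>M. M \<subseteq># N \<and> size M = k"
proof -
  obtain xs where xs: "mset xs = N" using ex_mset by blast
  have "mset xs = mset (take k xs) + mset (drop k xs)"
    by (metis append_take_drop_id mset_append)
  then have "mset (take k xs) \<subseteq># N" using xs by (metis mset_subset_eq_add_left)
  moreover have "size (mset (take k xs)) = k" using assms xs by auto
  ultimately show ?thesis by blast
qed

definition wmset :: "'b set \<Rightarrow> ('b \<Rightarrow> nat) \<Rightarrow> 'b multiset" where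
  "wmset V f = (\<Sum>v\<in>V. replicate_mset (f v) v)"

lemma count_wmset: "finite V \<Longrightarrow> count (wmset V f) w = (if w \<in> V then f w else 0)"
  unfolding wmset_def by (simp add: count_sum)

lemma size_wmset: "size (wmset V f) = (\<Sum>v\<in>V. f v)"
  unfolding wmset_def by simp

lemma set_wmset: "finite V \<Longrightarrow> set_mset (wmset V f) \<subseteq> V"
proof
  fix x assume fV: "finite V" and x: "x \<in># wmset V f"
  then have "count (wmset V f) x > 0" by simp
  then show "x \<in> V" using count_wmset[OF fV, of f x] by (simp split: if_splits)
qed

lemma infinite_eucl: "infinite (UNIV :: 'a::euclidean_space set)"
proof -
  obtain b :: 'a where b: "b \<in> Basis" using nonempty_Basis by blast
  then have "b \<noteq> 0" by auto
  then have "inj (\<lambda>n::nat. real n *\<^sub>R b)" by (auto simp: inj_on_def)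
  then have "infinite (range (\<lambda>n::nat. real n *\<^sub>R b))" by (rule range_inj_infinite)
  then show ?thesis by (rule infinite_super[OF subset_UNIV])
qed

lemma covering_le:
  fixes K :: "'a::euclidean_space set"
  assumes lam: "lam > 0" and fin: "finite C0" and card: "card C0 \<le> N"
    and cov: "K \<subseteq> (\<Union>c\<in>C0. (\<lambda>x. c + lam *\<^sub>R x) ` K)"
  shows "covering_functional N K \<le> lam"
proof -
  have "infinite (UNIV - C0)" by (rule Diff_infinite_finite[OF fin infinite_eucl])
  from infinite_arbitrarily_large[OF this, of "N - card C0"]
  obtain B where B: "finite B" "card B = N - card C0" "B \<subseteq> UNIV - C0"
    by (elim exE conjE)
  define C where "C = C0 \<union> B"
  have disj: "C0 \<inter> B = {}" using B by blast
  have fC: "finite C" and cC: "card C = N" using B fin card disj unfolding C_def by (auto simp: card_Un_disjoint)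
  have KC: "K \<subseteq> (\<Union>c\<in>C. (\<lambda>x. c + lam *\<^sub>R x) ` K)"
    using cov unfolding C_def by (auto intro: subset_trans)
  have mem: "lam \<in> {\<gamma>. \<gamma> > 0 \<and> (\<exists>C. finite C \<and> card C = N \<and> K \<subseteq> (\<Union>c\<in>C. (\<lambda>x. c + \<gamma> *\<^sub>R x) ` K))}"
    by (rule CollectI, intro conjI exI[of _ C] lam fC cC KC)
  show ?thesis unfolding covering_functional_def
    by (rule cInf_lower[OF mem]) (rule bdd_belowI[of _ 0], simp)
qed

lemma cover_a:
  fixes V :: "'a::euclidean_space set"
  assumes fin: "finite V" and cardV: "card V = Suc d" and d1: "d \<ge> 1"
  shows "\<exists>C0. finite C0 \<and> card C0 \<le> (d + k) choose d \<and>
     convex hull V \<subseteq> (\<Union>c\<in>C0. (\<lambda>x. c + (real d / real (d + k)) *\<^sub>R x) ` (convex hull V))"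
proof -
  define D where "D = real (d + k)"
  define lam where "lam = real d / D"
  have Dpos: "D > 0" using d1 by (simp add: D_def)
  define cen where "cen M = (\<Sum>v\<in>V. (real (count M v) / D) *\<^sub>R v)" for M :: "'a multiset"
  define C0 where "C0 = cen ` multisets_of_size V k"
  have finC0: "finite C0" unfolding C0_def using fin by auto
  have "card C0 \<le> card (multisets_of_size V k)" unfolding C0_def
    by (rule card_image_le) (use fin in auto)
  also have "\<dots> = (d + k) choose k" using card_multisets_of_size[OF fin] cardV by simp
  also have "\<dots> = (d + k) choose d" using binomial_symmetric[of d "d+k"] by simp
  finally have cardC0: "card C0 \<le> (d + k) choose d" .
  have cov: "x \<in> (\<Union>c\<in>C0. (\<lambda>x. c + lam *\<^sub>R x) ` (convex hull V))" if x: "x \<in> convex hull V" for x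
  proof -
    obtain u where u: "\<forall>v\<in>V. 0 \<le> u v" "sum u V = 1" "(\<Sum>v\<in>V. u v *\<^sub>R v) = x"
      using x unfolding convex_hull_finite[OF fin] by blast
    define nv where "nv v = nat \<lfloor>D * u v\<rfloor>" for v
    have nv1: "real (nv v) \<le> D * u v" if "v \<in> V" for v
      using u(1) that Dpos unfolding nv_def by (simp add: of_nat_nat)
    have nv2: "real (nv v) > D * u v - 1" if "v \<in> V" for v
      using u(1) that Dpos unfolding nv_def
      by (simp add: of_nat_nat)
    have "real (\<Sum>v\<in>V. nv v) = (\<Sum>v\<in>V. real (nv v))" by simp
    also have "\<dots> > (\<Sum>v\<in>V. D * u v - 1)"
      by (rule sum_strict_mono) (use fin cardV nv2 in auto)
    also have "(\<Sum>v\<in>V. D * u v - 1) = D - real (Suc d)"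
      using u(2) cardV by (simp add: sum_subtractf sum_distrib_left[symmetric])
    finally have "real (\<Sum>v\<in>V. nv v) > real k - 1" unfolding D_def by simp
    then have "k \<le> (\<Sum>v\<in>V. nv v)" by linarith
    then obtain M where M: "M \<subseteq># wmset V nv" "size M = k"
      using sub_mset_size[of k "wmset V nv"] by (auto simp: size_wmset)
    have setM: "set_mset M \<subseteq> V" using set_mset_mono[OF M(1)] set_wmset[OF fin] by blast
    have cntM: "count M v \<le> nv v" if "v \<in> V" for v
      using mset_subset_eq_count[OF M(1), of v] count_wmset[OF fin, of nv v] that by simp
    have Mmem: "M \<in> multisets_of_size V k" using setM M(2) by (simp add: multisets_of_size_def)
    define z where "z v = (D * u v - real (count M v)) / real d" for v
    have z0: "\<forall>v\<in>V. 0 \<le> z v"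
    proof
      fix v assume v: "v \<in> V"
      have "real (count M v) \<le> real (nv v)" using cntM[OF v] by simp
      then have "0 \<le> D * u v - real (count M v)" using nv1[OF v] by linarith
      then show "0 \<le> z v" unfolding z_def using d1 by simp
    qed
    have sumcnt: "(\<Sum>v\<in>V. real (count M v)) = real k"
      using size_as_sum[OF fin setM] M(2) by (metis of_nat_sum)
    have zsum: "sum z V = 1"
    proof -
      have "sum z V = (\<Sum>v\<in>V. D * u v - real (count M v)) / real d"
        unfolding z_def by (simp add: sum_divide_distrib)
      also have "\<dots> = (D - real k) / real d"
        using u(2) sumcnt by (simp add: sum_subtractf sum_distrib_left[symmetric])
      also have "\<dots> = 1" using d1 unfolding D_def by simp
      finally show ?thesis .
    qed
    define y where "y = (\<Sum>v\<in>V. z v *\<^sub>R v)"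
    have y: "y \<in> convex hull V"
      unfolding convex_hull_finite[OF fin] y_def using z0 zsum by (intro CollectI exI[of _ z]) simp
    have "cen M + lam *\<^sub>R y = (\<Sum>v\<in>V. (real (count M v) / D + lam * z v) *\<^sub>R v)"
      unfolding cen_def y_def by (simp add: scaleR_sum_right scaleR_add_left sum.distrib)
    also have "\<dots> = (\<Sum>v\<in>V. u v *\<^sub>R v)"
    proof (rule sum.cong[OF refl])
      fix v assume "v \<in> V"
      have "real (count M v) / D + lam * z v = u v"
        unfolding lam_def z_def using Dpos d1 by (simp add: field_simps)
      then show "(real (count M v) / D + lam * z v) *\<^sub>R v = u v *\<^sub>R v" by simp
    qed
    finally have xe: "x = cen M + lam *\<^sub>R y" using u(3) by simp
    have cC: "cen M \<in> C0" unfolding C0_def using Mmem by (rule imageI)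
    show ?thesis by (rule UN_I[OF cC]) (rule image_eqI[where f="\<lambda>x. cen M + lam *\<^sub>R x", OF xe y])
  qed
  have "convex hull V \<subseteq> (\<Union>c\<in>C0. (\<lambda>x. c + lam *\<^sub>R x) ` (convex hull V))" using cov by (rule subsetI)
  then have "convex hull V \<subseteq> (\<Union>c\<in>C0. (\<lambda>x. c + (real d / real (d + k)) *\<^sub>R x) ` (convex hull V))"
    unfolding lam_def D_def .
  then show ?thesis using finC0 cardC0 by (intro exI[of _ C0] conjI)
qed

lemma hull_combo:
  fixes V :: "'a::euclidean_space set"
  assumes fin: "finite V" and cK: "c \<in> convex hull V" and q0: "\<forall>v\<in>V. 0 \<le> q v" and qs: "sum q V \<le> 1"
  shows "c + (\<Sum>v\<in>V. q v *\<^sub>R (v - c)) \<in> convex hull V"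
proof -
  define s where "s = sum q V"
  have s0: "s \<ge> 0" unfolding s_def using q0 by (simp add: sum_nonneg)
  have eq: "c + (\<Sum>v\<in>V. q v *\<^sub>R (v - c)) = (1 - s) *\<^sub>R c + (\<Sum>v\<in>V. q v *\<^sub>R v)"
    unfolding s_def by (simp add: scaleR_diff_right sum_subtractf scaleR_sum_left[symmetric] algebra_simps)
  show ?thesis
  proof (cases "s = 0")
    case True
    then have "\<forall>v\<in>V. q v = 0" using q0 fin unfolding s_def by (simp add: sum_nonneg_eq_0_iff)
    then show ?thesis using cK by simp
  next
    case False
    then have sp: "s > 0" using s0 by simp
    define y where "y = (\<Sum>v\<in>V. (q v / s) *\<^sub>R v)"
    have "sum (\<lambda>v. q v / s) V = 1" using sp unfolding s_def by (simp add: sum_divide_distrib[symmetric])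
    then have y: "y \<in> convex hull V"
      unfolding convex_hull_finite[OF fin] y_def using q0 sp by (auto intro!: exI[of _ "\<lambda>v. q v / s"])
    have "(\<Sum>v\<in>V. q v *\<^sub>R v) = s *\<^sub>R y"
      unfolding y_def scaleR_sum_right using sp by simp
    then have "c + (\<Sum>v\<in>V. q v *\<^sub>R (v - c)) = (1 - s) *\<^sub>R c + s *\<^sub>R y" using eq by simp
    moreover have "(1 - s) *\<^sub>R c + s *\<^sub>R y \<in> convex hull V"
      by (rule convexD[OF convex_convex_hull cK y]) (use s0 qs s_def in auto)
    ultimately show ?thesis by simp
  qed
qed

lemma binom2: "(2 * m + l) choose l \<le> 2 ^ l * ((m + l) choose l)"
proof (induction l)
  case 0 then show ?case by simp
next
  case (Suc l)
  have e1: "Suc l * ((2 * m + Suc l) choose Suc l) = (2 * m + Suc l) * ((2 * m + l) choose l)"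
    using Suc_times_binomial[of l "2 * m + l"] by simp
  have e2: "Suc l * ((m + Suc l) choose Suc l) = (m + Suc l) * ((m + l) choose l)"
    using Suc_times_binomial[of l "m + l"] by simp
  have "Suc l * ((2 * m + Suc l) choose Suc l) \<le> (2 * m + Suc l) * (2 ^ l * ((m + l) choose l))"
    unfolding e1 using Suc.IH by (rule mult_left_mono) simp
  also have "\<dots> \<le> (2 * (m + Suc l)) * (2 ^ l * ((m + l) choose l))"
    by (rule mult_right_mono) auto
  also have "\<dots> = 2 ^ Suc l * ((m + Suc l) * ((m + l) choose l))"
    by (simp only: power_Suc ac_simps)
  also have "\<dots> = 2 ^ Suc l * (Suc l * ((m + Suc l) choose Suc l))"
    by (simp only: e2)
  also have "\<dots> = Suc l * (2 ^ Suc l * ((m + Suc l) choose Suc l))"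
    by (simp only: ac_simps)
  finally show ?case by (simp only: Suc_mult_le_cancel1)
qed

lemma cover_b:
  fixes V :: "'a::euclidean_space set" and c :: 'a
  assumes fin: "finite V" and cardV: "card V = 2 * m" and m1: "m \<ge> 1"
    and symV: "\<forall>v\<in>V. (2::real) *\<^sub>R c - v \<in> V"
    and cK: "c \<in> convex hull V"
  shows "\<exists>C0. finite C0 \<and> card C0 \<le> (2 * m + l) choose l \<and>
     convex hull V \<subseteq> (\<Union>c\<in>C0. (\<lambda>x. c + (real m / real (m + l)) *\<^sub>R x) ` (convex hull V))"
proof -
  define \<sigma> where "\<sigma> v = (2::real) *\<^sub>R c - v" for v
  have ss: "\<sigma> (\<sigma> v) = v" for v unfolding \<sigma>_def by simp
  have injs: "inj_on \<sigma> V" by (metis inj_on_inverseI ss)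
  have sV: "\<sigma> ` V = V"
  proof
    show "\<sigma> ` V \<subseteq> V" using symV unfolding \<sigma>_def by auto
    show "V \<subseteq> \<sigma> ` V"
    proof
      fix v assume "v \<in> V"
      then have "\<sigma> v \<in> V" using symV unfolding \<sigma>_def by auto
      then show "v \<in> \<sigma> ` V" using ss[of v] by (metis image_eqI)
    qed
  qed
  define A where "A q = (\<Sum>v\<in>V. q v *\<^sub>R (v - c))" for q :: "'a \<Rightarrow> real"
  have Arefl: "A (\<lambda>v. q (\<sigma> v)) = - A q" for q
  proof -
    have "A (\<lambda>v. q (\<sigma> v)) = (\<Sum>v\<in>V. q (\<sigma> v) *\<^sub>R (c - \<sigma> v))"
      unfolding A_def by (rule sum.cong) (auto simp: \<sigma>_def algebra_simps scaleR_2)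
    also have "\<dots> = (\<Sum>w\<in>\<sigma> ` V. q w *\<^sub>R (c - w))"
      using sum.reindex[OF injs, of "\<lambda>w. q w *\<^sub>R (c - w)"] by simp
    also have "\<dots> = - A q" unfolding sV A_def by (simp add: sum_negf[symmetric] algebra_simps)
    finally show ?thesis .
  qed
  have Adiff: "A (\<lambda>v. q v - r v) = A q - A r" for q r
    unfolding A_def by (simp add: scaleR_diff_left sum_subtractf)
  have Ahalf: "2 *\<^sub>R A q = A (\<lambda>v. q v - q (\<sigma> v))" for q
    using Adiff[of q "\<lambda>v. q (\<sigma> v)"] Arefl[of q] by (simp add: scaleR_2)
  define D where "D = real (m + l)"
  define lam where "lam = real m / D"
  have Dpos: "D > 0" using m1 by (simp add: D_def)
  obtain e :: 'a where e: "e \<notin> V" using ex_new_if_finite[OF infinite_eucl fin] by blast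
  define cen where "cen M = (1 - lam) *\<^sub>R c + (\<Sum>v\<in>V. (real (count M v) / D) *\<^sub>R (v - c))" for M :: "'a multiset"
  define C0 where "C0 = cen ` multisets_of_size (insert e V) l"
  have finC0: "finite C0" unfolding C0_def using fin by auto
  have "card C0 \<le> card (multisets_of_size (insert e V) l)" unfolding C0_def
    by (rule card_image_le) (use fin in auto)
  also have "\<dots> = (2 * m + l) choose l" using card_multisets_of_size[of "insert e V" l] fin e cardV by simp
  finally have cardC0: "card C0 \<le> (2 * m + l) choose l" .
  have cov: "x \<in> (\<Union>c\<in>C0. (\<lambda>x. c + lam *\<^sub>R x) ` (convex hull V))" if x: "x \<in> convex hull V" for x
  proof -
    obtain u where u: "\<forall>v\<in>V. 0 \<le> u v" "sum u V = 1" "(\<Sum>v\<in>V. u v *\<^sub>R v) = x"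
      using x unfolding convex_hull_finite[OF fin] by blast
    have xc: "x - c = A u"
      unfolding A_def u(3)[symmetric] using u(2)
      by (simp add: scaleR_diff_right sum_subtractf scaleR_sum_left[symmetric])
    define p where "p v = max 0 (u v - u (\<sigma> v))" for v
    have pdiff: "p v - p (\<sigma> v) = u v - u (\<sigma> v)" for v unfolding p_def ss by simp
    have Apu: "A p = A u"
    proof -
      have "2 *\<^sub>R A p = 2 *\<^sub>R A u" unfolding Ahalf pdiff ..
      then show ?thesis by simp
    qed
    have p0: "\<forall>v\<in>V. 0 \<le> p v" unfolding p_def by simp
    have pu: "p v \<le> u v" if "v \<in> V" for v
    proof -
      have "\<sigma> v \<in> V" using that sV by blast
      then show ?thesis using u(1) that unfolding p_def by auto
    qed
    have psum: "sum p V \<le> 1" using sum_mono[of V p u] pu u(2) by simp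
    define S where "S = {v\<in>V. p v > 0}"
    have SV: "S \<subseteq> V" unfolding S_def by auto
    have disj: "S \<inter> \<sigma> ` S = {}"
    proof (rule ccontr)
      assume "S \<inter> \<sigma> ` S \<noteq> {}"
      then obtain w where w: "w \<in> S" "\<sigma> w \<in> S" by auto
      then have "u w > u (\<sigma> w)" "u (\<sigma> w) > u w" unfolding S_def p_def using ss[of w] by auto
      then show False by simp
    qed
    have "card S + card (\<sigma> ` S) = card (S \<union> \<sigma> ` S)"
      using disj fin SV by (intro card_Un_disjoint[symmetric]) (auto intro: finite_subset)
    also have "\<dots> \<le> card V" using SV sV fin by (intro card_mono) auto
    finally have "card S + card S \<le> 2 * m" using card_image[OF inj_on_subset[OF injs SV]] cardV by simp
    then have cardS: "card S \<le> m" by simp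
    define nv where "nv v = nat \<lfloor>D * p v\<rfloor>" for v
    have nv1: "real (nv v) \<le> D * p v" if "v \<in> V" for v
      using p0 that Dpos unfolding nv_def by (simp add: of_nat_nat)
    have nv2: "D * p v - real (nv v) < 1" if "v \<in> V" for v
    proof -
      have "0 \<le> D * p v" using p0 that Dpos by simp
      then have "real (nv v) = real_of_int \<lfloor>D * p v\<rfloor>" unfolding nv_def by (simp add: of_nat_nat)
      moreover have "D * p v < real_of_int \<lfloor>D * p v\<rfloor> + 1" by linarith
      ultimately show ?thesis by linarith
    qed
    have nvS: "nv v = 0" if "v \<in> V" "v \<notin> S" for v
    proof -
      have "p v = 0" using that p0 unfolding S_def by force
      then show ?thesis unfolding nv_def by simp
    qed
    obtain M where M: "M \<subseteq># wmset V nv" "size M \<le> l" "size M = l \<or> M = wmset V nv"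
    proof (cases "l \<le> size (wmset V nv)")
      case True
      then obtain M where "M \<subseteq># wmset V nv" "size M = l" using sub_mset_size by blast
      then show ?thesis using that by auto
    next
      case False
      then show ?thesis using that[of "wmset V nv"] by auto
    qed
    have setM: "set_mset M \<subseteq> V" using set_mset_mono[OF M(1)] set_wmset[OF fin] by blast
    have cntM: "count M v \<le> nv v" if "v \<in> V" for v
      using mset_subset_eq_count[OF M(1), of v] count_wmset[OF fin, of nv v] that by simp
    define M' where "M' = M + replicate_mset (l - size M) e"
    have M'mem: "M' \<in> multisets_of_size (insert e V) l"
      using setM M(2) unfolding M'_def multisets_of_size_def by auto
    have cntM': "count M' v = count M v" if "v \<in> V" for v
      using that e unfolding M'_def by auto
    have cenM: "cen M' = cen M" unfolding cen_def using cntM' by simp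
    define q where "q v = (D * p v - real (count M v)) / real m" for v
    have q0: "\<forall>v\<in>V. 0 \<le> q v"
    proof
      fix v assume v: "v \<in> V"
      have "real (count M v) \<le> real (nv v)" using cntM[OF v] by simp
      then have "0 \<le> D * p v - real (count M v)" using nv1[OF v] by linarith
      then show "0 \<le> q v" unfolding q_def using m1 by simp
    qed
    have sumcnt: "(\<Sum>v\<in>V. real (count M v)) = real (size M)"
      using size_as_sum[OF fin setM] by (metis of_nat_sum)
    have qsum: "sum q V \<le> 1"
      using M(3)
    proof
      assume sz: "size M = l"
      have "sum q V = (\<Sum>v\<in>V. D * p v - real (count M v)) / real m"
        unfolding q_def by (simp add: sum_divide_distrib)
      also have "\<dots> = (D * sum p V - real l) / real m"
        using sumcnt sz by (simp add: sum_subtractf sum_distrib_left)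
      also have "\<dots> \<le> (D - real l) / real m"
        using psum Dpos m1 by (intro divide_right_mono) auto
      also have "\<dots> = 1" using m1 unfolding D_def by simp
      finally show ?thesis .
    next
      assume MN: "M = wmset V nv"
      have "sum q V \<le> (\<Sum>v\<in>V. if v \<in> S then 1 / real m else 0)"
      proof (rule sum_mono)
        fix v assume v: "v \<in> V"
        have cv: "count M v = nv v" using MN count_wmset[OF fin, of nv v] v by simp
        show "q v \<le> (if v \<in> S then 1 / real m else 0)"
        proof (cases "v \<in> S")
          case True
          then show ?thesis using nv2[OF v] m1 unfolding q_def cv by (simp add: divide_right_mono)
        next
          case False
          then have "p v = 0" using v p0 unfolding S_def by force
          then show ?thesis using nvS[OF v False] unfolding q_def cv by simp
        qed
      qed
      also have "\<dots> = (\<Sum>v\<in>V \<inter> S. 1 / real m)" by (rule sum.inter_restrict[symmetric]) (rule fin)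
      also have "\<dots> = real (card S) / real m" using SV by (simp add: Int_absorb1)
      also have "\<dots> \<le> 1" using cardS m1 by simp
      finally show ?thesis .
    qed
    define y where "y = c + A q"
    have y: "y \<in> convex hull V" unfolding y_def A_def by (rule hull_combo[OF fin cK q0 qsum])
    have split: "(\<Sum>v\<in>V. (real (count M v) / D + lam * q v) *\<^sub>R (v - c))
        = (\<Sum>v\<in>V. (real (count M v) / D) *\<^sub>R (v - c)) + lam *\<^sub>R A q"
      unfolding A_def by (simp only: scaleR_add_left sum.distrib scaleR_sum_right scaleR_scaleR)
    have "cen M + lam *\<^sub>R y = c + (\<Sum>v\<in>V. (real (count M v) / D + lam * q v) *\<^sub>R (v - c))"
      unfolding split cen_def y_def by (simp add: algebra_simps)
    also have "(\<Sum>v\<in>V. (real (count M v) / D + lam * q v) *\<^sub>R (v - c)) = A p"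
      unfolding A_def
    proof (rule sum.cong[OF refl])
      fix v assume "v \<in> V"
      have "real (count M v) / D + lam * q v = p v"
        unfolding lam_def q_def using Dpos m1 by (simp add: field_simps)
      then show "(real (count M v) / D + lam * q v) *\<^sub>R (v - c) = p v *\<^sub>R (v - c)" by simp
    qed
    finally have xe: "x = cen M' + lam *\<^sub>R y" using Apu xc cenM by (simp add: algebra_simps)
    have cC: "cen M' \<in> C0" unfolding C0_def using M'mem by (rule imageI)
    show ?thesis by (rule UN_I[OF cC]) (rule image_eqI[where f="\<lambda>x. cen M' + lam *\<^sub>R x", OF xe y])
  qed
  have "convex hull V \<subseteq> (\<Union>c\<in>C0. (\<lambda>x. c + lam *\<^sub>R x) ` (convex hull V))" using cov by (rule subsetI)
  then have "convex hull V \<subseteq> (\<Union>c\<in>C0. (\<lambda>x. c + (real m / real (m + l)) *\<^sub>R x) ` (convex hull V))"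
    unfolding lam_def D_def .
  then show ?thesis using finC0 cardC0 by (intro exI[of _ C0] conjI)
qed

lemma refl_extreme:
  fixes K :: "'a::euclidean_space set"
  assumes sym: "\<forall>x\<in>K. (2::real) *\<^sub>R c - x \<in> K" and v: "v extreme_point_of K"
  shows "(2::real) *\<^sub>R c - v extreme_point_of K"
proof -
  have vK: "v \<in> K" using v by (simp add: extreme_point_of_def)
  show ?thesis unfolding extreme_point_of_def
  proof (intro conjI ballI)
    show "(2::real) *\<^sub>R c - v \<in> K" using sym vK by blast
  next
    fix a b assume a: "a \<in> K" and b: "b \<in> K"
    show "(2::real) *\<^sub>R c - v \<notin> open_segment a b"
    proof
      assume "(2::real) *\<^sub>R c - v \<in> open_segment a b"
      then obtain u where u: "a \<noteq> b" "0 < u" "u < 1" "(2::real) *\<^sub>R c - v = (1 - u) *\<^sub>R a + u *\<^sub>R b"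
        by (auto simp: in_segment)
      have "v = (1 - u) *\<^sub>R ((2::real) *\<^sub>R c - a) + u *\<^sub>R ((2::real) *\<^sub>R c - b)"
        using u(4) by (simp add: algebra_simps)
      moreover have "(2::real) *\<^sub>R c - a \<noteq> (2::real) *\<^sub>R c - b" using u(1) by simp
      ultimately have "v \<in> open_segment ((2::real) *\<^sub>R c - a) ((2::real) *\<^sub>R c - b)"
        using u(2,3) by (auto simp: in_segment)
      moreover have "(2::real) *\<^sub>R c - a \<in> K" "(2::real) *\<^sub>R c - b \<in> K" using sym a b by auto
      ultimately show False using v unfolding extreme_point_of_def by blast
    qed
  qed
qed

lemma two_powr_props:
  assumes "1 \<le> n" "n \<le> d"
  shows "(2 powr (real n / real d)) ^ d = 2 ^ n" "1 < 2 powr (real n / real d)" "2 powr (real n / real d) \<le> 2"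
proof -
  have dpos: "real d > 0" using assms by simp
  have "(2 powr (real n / real d)) ^ d = 2 powr (real d * (real n / real d))"
    by (simp add: powr_power)
  also have "\<dots> = 2 powr (real n)" using dpos by simp
  also have "\<dots> = 2 ^ n" by (simp add: powr_realpow)
  finally show "(2 powr (real n / real d)) ^ d = 2 ^ n" .
  have "(2::real) powr 0 < 2 powr (real n / real d)"
    by (rule powr_less_mono) (use assms dpos in auto)
  then show "1 < 2 powr (real n / real d)" by simp
  have "(2::real) powr (real n / real d) \<le> 2 powr 1"
    by (rule powr_mono) (use assms dpos in auto)
  then show "2 powr (real n / real d) \<le> 2" by simp
qed

theorem theorem4p3:
  fixes K :: "'a::euclidean_space set" and m :: nat
  assumes "polytope K"
  shows "(card (vertices K) = m \<and> m \<ge> DIM('a) + 1 \<longrightarrow>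
           (let t = 2 powr (real DIM('a) / real (m - 1)) in
              covering_functional (2 ^ DIM('a)) K
                \<le> real (m - 1) / real (m - 1 + kfun (m - 1) t)
            \<and> real (m - 1) / real (m - 1 + kfun (m - 1) t)
                \<le> real (m - 1) / (real (m - 1) + of_int \<lfloor>afun t * real (m - 1)\<rfloor>)))
       \<and> (centrally_symmetric K \<and> card (vertices K) = 2 * m \<and> m \<ge> DIM('a) \<longrightarrow>
           (let t = 2 powr (real DIM('a) / real m) in
              covering_functional (2 ^ DIM('a)) K
                \<le> real m / real (m + lfun m t)
            \<and> real m / real (m + lfun m t)
                \<le> real m / (real m + of_int \<lfloor>bfun t * real m\<rfloor>)))"
proof -
  define V where "V = vertices K"
  have Kc: "K = convex hull V"
    using Krein_Milman_Minkowski[OF polytope_imp_compact[OF assms] polytope_imp_convex[OF assms]]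
    unfolding V_def vertices_def by simp
  have VK: "V \<subseteq> K" unfolding V_def vertices_def by (auto simp: extreme_point_of_def)
  have n1: "DIM('a) \<ge> 1" using DIM_positive[where 'a='a] by linarith
  show ?thesis
  proof (intro conjI impI)
    assume A: "card (vertices K) = m \<and> m \<ge> DIM('a) + 1"
    then obtain d where md: "m = Suc d" by (cases m) auto
    have cardV: "card V = Suc d" using A md V_def by simp
    have finV: "finite V" using cardV by (intro card_ge_0_finite) simp
    have nd: "DIM('a) \<le> d" using A md by simp
    have d1: "d \<ge> 1" using nd n1 by linarith
    define t where "t = 2 powr (real DIM('a) / real d)"
    note tp = two_powr_props[OF n1 nd, folded t_def]
    define k where "k = kfun d t"
    have T1: "(1::real) \<le> t ^ d" using tp by simp
    have "real ((d + k) choose d) \<le> t ^ d"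
      using kfun_props(2)[OF d1 T1 refl, of 0] T1 unfolding k_def by simp
    then have "real ((d + k) choose d) \<le> real (2 ^ DIM('a))" using tp(1) by simp
    then have ck: "(d + k) choose d \<le> 2 ^ DIM('a)" by (simp only: of_nat_le_iff)
    obtain C0 where C0: "finite C0" "card C0 \<le> (d + k) choose d"
      "convex hull V \<subseteq> (\<Union>c\<in>C0. (\<lambda>x. c + (real d / real (d + k)) *\<^sub>R x) ` (convex hull V))"
      using cover_a[OF finV cardV d1, of k] by blast
    have cov: "covering_functional (2 ^ DIM('a)) K \<le> real d / real (d + k)"
      unfolding Kc by (rule covering_le) (use C0 ck d1 in auto)
    define a where "a = afun t"
    have a: "a > 0" "ffun a = t" using afun_props[OF tp(2) tp(3)] unfolding a_def by auto
    define j where "j = nat \<lfloor>a * real d\<rfloor>"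
    have fj: "of_int \<lfloor>a * real d\<rfloor> = real j" unfolding j_def using a by simp
    have "real j \<le> a * real d" using fj by linarith
    from binom_f[OF a(1) this] have "real ((d + j) choose d) \<le> t ^ d" using a(2) by simp
    then have jk: "j \<le> k" using kfun_props(1)[OF d1 T1 refl] unfolding k_def by simp
    have second: "real d / real (d + k) \<le> real d / (real d + of_int \<lfloor>a * real d\<rfloor>)"
      unfolding fj using jk d1 by (intro divide_left_mono) auto
    show "let t = 2 powr (real DIM('a) / real (m - 1)) in
              covering_functional (2 ^ DIM('a)) K
                \<le> real (m - 1) / real (m - 1 + kfun (m - 1) t)
            \<and> real (m - 1) / real (m - 1 + kfun (m - 1) t)
                \<le> real (m - 1) / (real (m - 1) + of_int \<lfloor>afun t * real (m - 1)\<rfloor>)"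
      unfolding Let_def md using cov second unfolding t_def k_def a_def by simp
  next
    assume B: "centrally_symmetric K \<and> card (vertices K) = 2 * m \<and> m \<ge> DIM('a)"
    obtain c where c: "\<forall>x\<in>K. (2::real) *\<^sub>R c - x \<in> K" using B unfolding centrally_symmetric_def by blast
    have cardV: "card V = 2 * m" using B V_def by simp
    have nm: "DIM('a) \<le> m" using B by simp
    have m1: "m \<ge> 1" using nm n1 by linarith
    have finV: "finite V" using cardV m1 by (intro card_ge_0_finite) simp
    have Vsym: "\<forall>v\<in>V. (2::real) *\<^sub>R c - v \<in> V"
      using refl_extreme[OF c] unfolding V_def vertices_def by blast
    have "V \<noteq> {}" using cardV m1 by auto
    then obtain v where "v \<in> K" using VK by blast
    then have "(1/2::real) *\<^sub>R v + (1/2::real) *\<^sub>R ((2::real) *\<^sub>R c - v) \<in> K"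
      using c by (intro convexD[OF polytope_imp_convex[OF assms]]) auto
    then have cK: "c \<in> convex hull V" unfolding Kc[symmetric] by (simp add: algebra_simps)
    define t where "t = 2 powr (real DIM('a) / real m)"
    note tp = two_powr_props[OF n1 nm, folded t_def]
    define l where "l = lfun m t"
    have T1: "(1::real) \<le> t ^ m" using tp by simp
    have "2 ^ l * real ((m + l) choose m) \<le> t ^ m"
      using lfun_props(2)[OF m1 T1 refl, of 0] T1 unfolding l_def by simp
    then have "real (2 ^ l * ((m + l) choose m)) \<le> real (2 ^ DIM('a))" using tp(1) by simp
    then have cl: "2 ^ l * ((m + l) choose m) \<le> 2 ^ DIM('a)" by (simp only: of_nat_le_iff)
    have "(2 * m + l) choose l \<le> 2 ^ l * ((m + l) choose l)" by (rule binom2)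
    also have "(m + l) choose l = (m + l) choose m" using binomial_symmetric[of m "m+l"] by simp
    finally have cl2: "(2 * m + l) choose l \<le> 2 ^ DIM('a)" using cl by linarith
    obtain C0 where C0: "finite C0" "card C0 \<le> (2 * m + l) choose l"
      "convex hull V \<subseteq> (\<Union>c\<in>C0. (\<lambda>x. c + (real m / real (m + l)) *\<^sub>R x) ` (convex hull V))"
      using cover_b[OF finV cardV m1 Vsym cK, of l] by blast
    have cov: "covering_functional (2 ^ DIM('a)) K \<le> real m / real (m + l)"
      unfolding Kc by (rule covering_le) (use C0 cl2 m1 in auto)
    define b where "b = bfun t"
    have b: "b > 0" "gfun b = t" using bfun_props[OF tp(2) tp(3)] unfolding b_def by auto
    define j where "j = nat \<lfloor>b * real m\<rfloor>"
    have fj: "of_int \<lfloor>b * real m\<rfloor> = real j" unfolding j_def using b by simp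
    have "real j \<le> b * real m" using fj by linarith
    from binom_g[OF b(1) this] have "2 ^ j * real ((m + j) choose m) \<le> t ^ m" using b(2) by simp
    then have jl: "j \<le> l" using lfun_props(1)[OF m1 T1 refl] unfolding l_def by simp
    have second: "real m / real (m + l) \<le> real m / (real m + of_int \<lfloor>b * real m\<rfloor>)"
      unfolding fj using jl m1 by (intro divide_left_mono) auto
    show "let t = 2 powr (real DIM('a) / real m) in
              covering_functional (2 ^ DIM('a)) K
                \<le> real m / real (m + lfun m t)
            \<and> real m / real (m + lfun m t)
                \<le> real m / (real m + of_int \<lfloor>bfun t * real m\<rfloor>)"
      unfolding Let_def using cov second unfolding t_def l_def b_def by simp
  qed
qed

end
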